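(* Let $S_X,S_Y$ be finite nonempty action sets, $\lambda\in[0,1)$, and let $\varphi:S_X\times S_Y\to\mathbb{R}$ be additive. If $\varphi\equiv0$ is $\lambda$-enforceable by $X$, then $\varphi\equiv0$ is $\lambda$-enforceable by $X$ using a reactive strategy, i.e., there exist $\sigma_X^0\in\Delta(S_X)$ and $\sigma_X:S_Y\to\Delta(S_X)$ such that the reactive strategy $(\sigma_X^0,\sigma_X)$ is $(\varphi,\lambda)$-autocratic.
   Context: Two players $X,Y$ play a repeated game with finite action sets $S_X,S_Y$; $\Delta(S)$ denotes the probability distributions on $S$. $\varphi$ is additive if there are $\phi_X:S_X\to\mathbb{R}$ and $\phi_Y:S_Y\to\mathbb{R}$ with $\varphi(s_X,s_Y)=\phi_X(s_X)+\phi_Y(s_Y)$ for all $s_X,s_Y$. Histories: $\mathcal{H}=\bigcup_{T\ge0}(S_X\times S_Y)^T$. A behavioral strategy for $X$ is a map $\sigma_X:\mathcal{H}\to\Delta(S_X)$, similarly for $Y$; in each round $t$ players independently draw actions from their strategies evaluated at the history of realized action pairs of rounds $0,\dots,t-1$, and $\mathbb{E}_{\sigma_X,\sigma_Y}$ is the expectation over the resulting play. For $\lambda\in[0,1)$, $\sigma_X$ is $(\varphi,\lambda)$-autocratic if for every behavioral strategy $\sigma_Y$ of $Y$, $\mathbb{E}_{\sigma_X,\sigma_Y}\big[(1-\lambda)\sum_{t\ge0}\lambda^t\varphi(s_X^t,s_Y^t)\big]=0$; $\varphi\equiv0$ is $\lambda$-enforceable by $X$ if a $(\varphi,\lambda)$-autocratic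 behavioral strategy for $X$ exists. A reactive strategy $(\sigma_X^0,\sigma_X)$ with $\sigma_X^0\in\Delta(S_X)$, $\sigma_X:S_Y\to\Delta(S_X)$ plays the mixed action $\sigma_X^0$ in round $0$ and $\sigma_X[s_Y^t]$ in round $t+1$, where $s_Y^t$ is $Y$'s realized action in round $t$. *)

theory Defs
  imports "HOL-Probability.Probability"
begin

text \<open>Action sets are the finite (nonempty) types 'a (for X) and 'b (for Y).
  Mixed actions are pmfs. A history is the list of realized action pairs in
  chronological order (round 0 first).\<close>

type_synonym ('a, 'b) history = "('a \<times> 'b) list"

definition additive :: "('a \<Rightarrow> 'b \<Rightarrow> real) \<Rightarrow> bool" where
  "additive \<phi> \<longleftrightarrow> (\<exists>\<phi>X \<phi>Y. \<forall>x y. \<phi> x y = \<phi>X x + \<phi>Y y)"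

primrec hist_dist ::
  "(('a, 'b) history \<Rightarrow> 'a pmf) \<Rightarrow> (('a, 'b) history \<Rightarrow> 'b pmf) \<Rightarrow> nat \<Rightarrow> ('a, 'b) history pmf" where
  "hist_dist \<sigma>X \<sigma>Y 0 = return_pmf []"
| "hist_dist \<sigma>X \<sigma>Y (Suc t) =
     bind_pmf (hist_dist \<sigma>X \<sigma>Y t) (\<lambda>h. map_pmf (\<lambda>s. h @ [s]) (pair_pmf (\<sigma>X h) (\<sigma>Y h)))"

definition round_dist ::
  "(('a, 'b) history \<Rightarrow> 'a pmf) \<Rightarrow> (('a, 'b) history \<Rightarrow> 'b pmf) \<Rightarrow> nat \<Rightarrow> ('a \<times> 'b) pmf" where
  "round_dist \<sigma>X \<sigma>Y t = bind_pmf (hist_dist \<sigma>X \<sigma>Y t) (\<lambda>h. pair_pmf (\<sigma>X h) (\<sigma>Y h))"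

text \<open>Expected normalized discounted payoff
  E[(1-\<lambda>) \<Sum>_t \<lambda>^t \<phi>(s_X^t, s_Y^t)]; since \<phi> is bounded (finite action sets),
  by dominated convergence this equals the discounted series of per-round expectations.\<close>
definition disc_value ::
  "('a \<Rightarrow> 'b \<Rightarrow> real) \<Rightarrow> real \<Rightarrow> (('a, 'b) history \<Rightarrow> 'a pmf) \<Rightarrow> (('a, 'b) history \<Rightarrow> 'b pmf) \<Rightarrow> real" where
  "disc_value \<phi> lam \<sigma>X \<sigma>Y =
     (1 - lam) * (\<Sum>t. lam ^ t * measure_pmf.expectation (round_dist \<sigma>X \<sigma>Y t) (\<lambda>(x, y). \<phi> x y))"

definition autocratic ::
  "('a \<Rightarrow> 'b \<Rightarrow> real) \<Rightarrow> real \<Rightarrow> (('a, 'b) history \<Rightarrow> 'a pmf) \<Rightarrow> bool" where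
  "autocratic \<phi> lam \<sigma>X \<longleftrightarrow> (\<forall>\<sigma>Y. disc_value \<phi> lam \<sigma>X \<sigma>Y = 0)"

definition enforceable :: "('a \<Rightarrow> 'b \<Rightarrow> real) \<Rightarrow> real \<Rightarrow> bool" where
  "enforceable \<phi> lam \<longleftrightarrow> (\<exists>\<sigma>X. autocratic \<phi> lam \<sigma>X)"

definition reactive :: "'a pmf \<Rightarrow> ('b \<Rightarrow> 'a pmf) \<Rightarrow> ('a, 'b) history \<Rightarrow> 'a pmf" where
  "reactive \<sigma>0 \<sigma> h = (if h = [] then \<sigma>0 else \<sigma> (snd (last h)))"

end

theory Submission imports Defs begin

lemma E_bind_fin:
  fixes p :: "'c::finite pmf" and f :: "'c \<Rightarrow> 'd::finite pmf" and h :: "'d \<Rightarrow> real"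
  shows "measure_pmf.expectation (bind_pmf p f) h = measure_pmf.expectation p (\<lambda>s. measure_pmf.expectation (f s) h)"
  by (subst pmf_expectation_bind[of UNIV]) (auto simp: integral_measure_pmf[of UNIV])

lemma E_fin_integrable:
  fixes p :: "'c::finite pmf" and h :: "'c \<Rightarrow> real"
  shows "integrable (measure_pmf p) h"
  by (rule integrable_measure_pmf_finite) auto

lemma E_bounds:
  fixes p :: "'c::finite pmf" and h :: "'c \<Rightarrow> real"
  shows "Min (range h) \<le> measure_pmf.expectation p h \<and> measure_pmf.expectation p h \<le> Max (range h)"
proof
  show "Min (range h) \<le> measure_pmf.expectation p h"
    by (rule measure_pmf.integral_ge_const) (auto simp: E_fin_integrable)
  show "measure_pmf.expectation p h \<le> Max (range h)"
    by (rule measure_pmf.integral_le_const) (auto simp: E_fin_integrable)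
qed

lemma E_abs_bound:
  fixes p :: "'c::finite pmf" and h :: "'c \<Rightarrow> real"
  shows "\<bar>measure_pmf.expectation p h\<bar> \<le> (\<Sum>x\<in>UNIV. \<bar>h x\<bar>)"
proof -
  have "Max (range h) \<le> (\<Sum>x\<in>UNIV. \<bar>h x\<bar>)"
  proof -
    have "Max (range h) \<in> range h" by (rule Max_in) auto
    then obtain x where "Max (range h) = h x" by (metis rangeE)
    moreover have "h x \<le> \<bar>h x\<bar>" by simp
    moreover have "\<bar>h x\<bar> \<le> (\<Sum>x\<in>UNIV. \<bar>h x\<bar>)" by (rule member_le_sum) auto
    ultimately show ?thesis by linarith
  qed
  moreover have "- (\<Sum>x\<in>UNIV. \<bar>h x\<bar>) \<le> Min (range h)"
  proof -
    have "Min (range h) \<in> range h" by (rule Min_in) auto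
    then obtain x where "Min (range h) = h x" by (metis rangeE)
    moreover have "-\<bar>h x\<bar> \<le> h x" by simp
    moreover have "\<bar>h x\<bar> \<le> (\<Sum>x\<in>UNIV. \<bar>h x\<bar>)" by (rule member_le_sum) auto
    ultimately show ?thesis by linarith
  qed
  ultimately show ?thesis using E_bounds[of h p] by linarith
qed

lemma summable_bounded_geo:
  fixes a :: "nat \<Rightarrow> real"
  assumes "0 \<le> lam" "lam < 1" "\<And>t. \<bar>a t\<bar> \<le> B"
  shows "summable (\<lambda>t. lam ^ t * a t)"
proof (rule summable_comparison_test[where g="\<lambda>t. B * lam ^ t"])
  show "\<exists>N. \<forall>n\<ge>N. norm (lam ^ n * a n) \<le> B * lam ^ n"
    using assms by (auto simp: abs_mult mult.commute intro!: mult_right_mono)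
  show "summable (\<lambda>t. B * lam ^ t)"
    using assms by (intro summable_mult summable_geometric) auto
qed

lemma suminf_shift:
  fixes a :: "nat \<Rightarrow> real"
  assumes lam: "0 \<le> lam" "lam < 1" and B: "\<And>t. \<bar>a t\<bar> \<le> B"
  shows "(\<Sum>t. lam ^ t * a t) = a 0 + lam * (\<Sum>t. lam ^ t * a (Suc t))"
proof -
  have "(\<Sum>t. lam ^ Suc t * a (Suc t)) = (\<Sum>t. lam ^ t * a t) - a 0"
    using suminf_split_head[OF summable_bounded_geo[OF lam B]] by simp
  moreover have "(\<Sum>t. lam ^ Suc t * a (Suc t)) = lam * (\<Sum>t. lam ^ t * a (Suc t))"
  proof -
    have s: "summable (\<lambda>t. lam ^ t * a (Suc t))" using summable_bounded_geo[OF lam B] by blast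
    show ?thesis using suminf_mult[OF s, of lam] by (simp add: mult.assoc)
  qed
  ultimately show ?thesis by simp
qed

lemma mix_alg:
  fixes M m v :: real
  assumes "M - m \<noteq> 0"
  shows "M * ((v - m) / (M - m)) + m * (1 - (v - m) / (M - m)) = v"
proof -
  have "M * ((v - m) / (M - m)) + m * (1 - (v - m) / (M - m)) = m + (M - m) * ((v - m) / (M - m))"
    by (simp add: algebra_simps add_divide_distrib[symmetric] diff_divide_distrib[symmetric])
  also have "\<dots> = v" using assms by simp
  finally show ?thesis .
qed

lemma exists_pmf_val:
  fixes f :: "'a::finite \<Rightarrow> real"
  assumes "Min (range f) \<le> v" "v \<le> Max (range f)"
  shows "\<exists>p. measure_pmf.expectation p f = v"
proof -
  have "Min (range f) \<in> range f" by (rule Min_in) auto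
  then obtain xm where xm: "f xm = Min (range f)" by (metis rangeE)
  have "Max (range f) \<in> range f" by (rule Max_in) auto
  then obtain xM where xM: "f xM = Max (range f)" by (metis rangeE)
  show ?thesis
  proof (cases "Max (range f) = Min (range f)")
    case True
    then have "v = f xm" using assms xm by linarith
    then show ?thesis by (intro exI[of _ "return_pmf xm"]) simp
  next
    case False
    define q where "q = (v - Min (range f)) / (Max (range f) - Min (range f))"
    have lt: "Min (range f) < Max (range f)" using False assms by linarith
    have q: "0 \<le> q" "q \<le> 1" using assms lt by (auto simp: q_def field_simps)
    have "measure_pmf.expectation (map_pmf (\<lambda>b. if b then xM else xm) (bernoulli_pmf q)) f
       = f xM * q + f xm * (1 - q)" using q by simp
    also have "\<dots> = v"
    proof -
      have ne: "Max (range f) - Min (range f) \<noteq> 0" using lt by simp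
      show ?thesis unfolding xm xM q_def using mix_alg[OF ne] by simp
    qed
    finally show ?thesis by blast
  qed
qed


lemma geo_sum:
  fixes lam K :: real
  assumes "0 \<le> lam" "lam < 1"
  shows "(\<Sum>t. lam ^ t * K) = K / (1 - lam)"
proof -
  have "(\<Sum>t. lam ^ t * K) = (\<Sum>t. lam ^ t) * K"
    using assms by (intro suminf_mult2[symmetric] summable_geometric) auto
  also have "\<dots> = K / (1 - lam)" using assms by (subst suminf_geometric) auto
  finally show ?thesis .
qed

lemma rd0: "round_dist \<sigma>X \<sigma>Y 0 = pair_pmf (\<sigma>X []) (\<sigma>Y [])"
  by (simp add: round_dist_def bind_return_pmf)

lemma rd_react:
  "map_pmf fst (round_dist (reactive \<sigma>0 \<sigma>) \<sigma>Y (Suc t)) =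
     bind_pmf (round_dist (reactive \<sigma>0 \<sigma>) \<sigma>Y t) (\<lambda>s. \<sigma> (snd s))"
  by (simp add: round_dist_def bind_assoc_pmf bind_map_pmf map_bind_pmf map_fst_pair_pmf reactive_def)

lemma rd_const:
  "map_pmf snd (round_dist \<sigma>X (\<lambda>_. return_pmf y) t) = return_pmf y"
  by (simp add: round_dist_def map_bind_pmf map_snd_pair_pmf)

lemma E_split:
  fixes p :: "('a::finite \<times> 'b::finite) pmf" and \<phi> :: "'a \<Rightarrow> 'b \<Rightarrow> real"
    and \<phi>X :: "'a \<Rightarrow> real" and \<phi>Y :: "'b \<Rightarrow> real"
  assumes "\<And>x y. \<phi> x y = \<phi>X x + \<phi>Y y"
  shows "measure_pmf.expectation p (\<lambda>(x, y). \<phi> x y) =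
    measure_pmf.expectation (map_pmf fst p) \<phi>X + measure_pmf.expectation (map_pmf snd p) \<phi>Y"
proof -
  have "measure_pmf.expectation p (\<lambda>(x, y). \<phi> x y) = measure_pmf.expectation p (\<lambda>s. \<phi>X (fst s) + \<phi>Y (snd s))"
    by (intro Bochner_Integration.integral_cong) (auto simp: assms split: prod.splits)
  also have "\<dots> = measure_pmf.expectation p (\<lambda>s. \<phi>X (fst s)) + measure_pmf.expectation p (\<lambda>s. \<phi>Y (snd s))"
    by (rule Bochner_Integration.integral_add) (rule E_fin_integrable)+
  finally show ?thesis by simp
qed


theorem theorem2:
  fixes \<phi> :: "'a::finite \<Rightarrow> 'b::finite \<Rightarrow> real" and lam :: real
  assumes "0 \<le> lam" and "lam < 1"
    and "additive \<phi>"
    and "enforceable \<phi> lam"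
  shows "\<exists>\<sigma>0 \<sigma>. autocratic \<phi> lam (reactive \<sigma>0 \<sigma>)"
proof -
  note lam = assms(1,2)
  obtain \<phi>X \<phi>Y where phi: "\<And>x y. \<phi> x y = \<phi>X x + \<phi>Y y"
    using assms(3) unfolding additive_def by blast
  obtain \<sigma>X where aut: "autocratic \<phi> lam \<sigma>X"
    using assms(4) unfolding enforceable_def by blast
  define P where "P = measure_pmf.expectation (\<sigma>X []) \<phi>X"
  define c where "c = - (1 - lam) * P"
  define e where "e y t = measure_pmf.expectation (map_pmf fst (round_dist \<sigma>X (\<lambda>_. return_pmf y) t)) \<phi>X" for y t
  define v where "v y = (1 - lam) * (\<Sum>t. lam ^ t * e y (Suc t))" for y
  define BX where "BX = (\<Sum>x\<in>UNIV. \<bar>\<phi>X x\<bar>)"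
  define BY where "BY = (\<Sum>x\<in>UNIV. \<bar>\<phi>Y x\<bar>)"
  have ebd: "\<bar>e y t\<bar> \<le> BX" for y t unfolding e_def BX_def by (rule E_abs_bound)
  have e0: "e y 0 = P" for y unfolding e_def P_def by (simp add: rd0 map_fst_pair_pmf)
  have vrange: "Min (range \<phi>X) \<le> v y \<and> v y \<le> Max (range \<phi>X)" for y
  proof -
    have s: "summable (\<lambda>t. lam ^ t * e y (Suc t))"
      by (rule summable_bounded_geo[OF lam]) (rule ebd)
    have sK: "summable (\<lambda>t. lam ^ t * K)" for K
      using lam by (intro summable_mult2 summable_geometric) auto
    have eb: "Min (range \<phi>X) \<le> e y t \<and> e y t \<le> Max (range \<phi>X)" for t
      unfolding e_def by (rule E_bounds)
    have "(\<Sum>t. lam ^ t * Min (range \<phi>X)) \<le> (\<Sum>t. lam ^ t * e y (Suc t))"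
      using eb lam by (intro suminf_le s sK) (auto intro: mult_left_mono)
    moreover have "(\<Sum>t. lam ^ t * e y (Suc t)) \<le> (\<Sum>t. lam ^ t * Max (range \<phi>X))"
      using eb lam by (intro suminf_le s sK) (auto intro: mult_left_mono)
    ultimately have "Min (range \<phi>X) / (1 - lam) \<le> (\<Sum>t. lam ^ t * e y (Suc t))"
        "(\<Sum>t. lam ^ t * e y (Suc t)) \<le> Max (range \<phi>X) / (1 - lam)"
      using geo_sum[OF lam] by auto
    then show ?thesis using lam unfolding v_def by (auto simp: field_simps)
  qed
  have key: "lam * v y + \<phi>Y y = c" for y
  proof -
    have "disc_value \<phi> lam \<sigma>X (\<lambda>_. return_pmf y) = 0" using aut unfolding autocratic_def by blast
    moreover have "measure_pmf.expectation (round_dist \<sigma>X (\<lambda>_. return_pmf y) t) (\<lambda>(x, y). \<phi> x y)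
        = e y t + \<phi>Y y" for t
      unfolding e_def by (simp add: E_split[OF phi] rd_const)
    ultimately have "(1 - lam) * (\<Sum>t. lam ^ t * (e y t + \<phi>Y y)) = 0"
      unfolding disc_value_def by simp
    hence z: "(\<Sum>t. lam ^ t * (e y t + \<phi>Y y)) = 0" using lam by simp
    have "(\<Sum>t. lam ^ t * (e y t + \<phi>Y y)) = (\<Sum>t. lam ^ t * e y t + lam ^ t * \<phi>Y y)"
      by (simp add: algebra_simps)
    also have "\<dots> = (\<Sum>t. lam ^ t * e y t) + (\<Sum>t. lam ^ t * \<phi>Y y)"
    proof -
      have s1: "summable (\<lambda>t. lam ^ t * e y t)" by (rule summable_bounded_geo[OF lam]) (rule ebd)
      have s2: "summable (\<lambda>t. lam ^ t * \<phi>Y y)"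
        using lam by (intro summable_mult2 summable_geometric) auto
      show ?thesis by (rule suminf_add[symmetric, OF s1 s2])
    qed
    also have "\<dots> = P + lam * (\<Sum>t. lam ^ t * e y (Suc t)) + \<phi>Y y / (1 - lam)"
    proof -
      have "(\<Sum>t. lam ^ t * e y t) = e y 0 + lam * (\<Sum>t. lam ^ t * e y (Suc t))"
        by (rule suminf_shift[OF lam, of "e y" BX]) (rule ebd)
      then show ?thesis using geo_sum[OF lam, of "\<phi>Y y"] e0[of y] by simp
    qed
    finally have "P + lam * (\<Sum>t. lam ^ t * e y (Suc t)) + \<phi>Y y / (1 - lam) = 0" using z by simp
    hence "(1 - lam) * P + lam * ((1 - lam) * (\<Sum>t. lam ^ t * e y (Suc t))) + \<phi>Y y = 0"
      using lam by (simp add: field_simps)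
    then show ?thesis unfolding c_def v_def by (simp add: algebra_simps)
  qed
  have "\<forall>y. \<exists>p. measure_pmf.expectation p \<phi>X = v y"
    using vrange exists_pmf_val by blast
  then obtain \<sigma> where sig: "\<And>y. measure_pmf.expectation (\<sigma> y) \<phi>X = v y" by metis
  have "autocratic \<phi> lam (reactive (\<sigma>X []) \<sigma>)"
    unfolding autocratic_def
  proof
    fix \<sigma>Y :: "('a, 'b) history \<Rightarrow> 'b pmf"
    define R where "R = round_dist (reactive (\<sigma>X []) \<sigma>) \<sigma>Y"
    define a where "a t = measure_pmf.expectation (map_pmf fst (R t)) \<phi>X" for t
    define b where "b t = measure_pmf.expectation (map_pmf snd (R t)) \<phi>Y" for t
    have abd: "\<bar>a t\<bar> \<le> BX" for t unfolding a_def BX_def by (rule E_abs_bound)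
    have bbd: "\<bar>b t\<bar> \<le> BY" for t unfolding b_def BY_def by (rule E_abs_bound)
    have Eab: "measure_pmf.expectation (R t) (\<lambda>(x, y). \<phi> x y) = a t + b t" for t
      unfolding a_def b_def by (rule E_split[OF phi])
    have a0: "a 0 = P" unfolding a_def R_def P_def by (simp add: rd0 map_fst_pair_pmf reactive_def)
    have aS: "lam * a (Suc t) = c - b t" for t
    proof -
      have "a (Suc t) = measure_pmf.expectation (R t) (\<lambda>s. v (snd s))"
        unfolding a_def R_def rd_react by (simp add: E_bind_fin sig)
      hence "lam * a (Suc t) = measure_pmf.expectation (R t) (\<lambda>s. lam * v (snd s))"
        by simp
      also have "\<dots> = measure_pmf.expectation (R t) (\<lambda>s. c - \<phi>Y (snd s))"
        using key by (metis add_diff_cancel_right')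
      also have "\<dots> = c - measure_pmf.expectation (R t) (\<lambda>s. \<phi>Y (snd s))"
        by (subst Bochner_Integration.integral_diff) (auto intro: E_fin_integrable)
      finally show ?thesis unfolding b_def by simp
    qed
    have sa: "summable (\<lambda>t. lam ^ t * a t)" by (rule summable_bounded_geo[OF lam abd])
    have sb: "summable (\<lambda>t. lam ^ t * b t)" by (rule summable_bounded_geo[OF lam bbd])
    have "(\<Sum>t. lam ^ t * (a t + b t)) = (\<Sum>t. lam ^ t * a t + lam ^ t * b t)"
      by (simp add: algebra_simps)
    also have "\<dots> = (\<Sum>t. lam ^ t * a t) + (\<Sum>t. lam ^ t * b t)"
      by (intro suminf_add[symmetric] sa sb)
    also have "(\<Sum>t. lam ^ t * a t) = P + (\<Sum>t. lam ^ t * (lam * a (Suc t)))"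
    proof -
      have s1: "summable (\<lambda>t. lam ^ t * a (Suc t))"
        by (rule summable_bounded_geo[OF lam]) (rule abd)
      have sh: "(\<Sum>t. lam ^ t * a t) = a 0 + lam * (\<Sum>t. lam ^ t * a (Suc t))"
        by (rule suminf_shift[OF lam abd])
      have m: "lam * (\<Sum>t. lam ^ t * a (Suc t)) = (\<Sum>t. lam * (lam ^ t * a (Suc t)))"
        by (rule suminf_mult[OF s1, symmetric])
      have m2: "(\<lambda>t. lam * (lam ^ t * a (Suc t))) = (\<lambda>t. lam ^ t * (lam * a (Suc t)))"
        by (rule ext) (simp only: mult.left_commute)
      show ?thesis using sh m m2 a0 by simp
    qed
    also have "\<dots> = P + (\<Sum>t. lam ^ t * c - lam ^ t * b t)"
    proof -
      have "(\<lambda>t. lam ^ t * (lam * a (Suc t))) = (\<lambda>t. lam ^ t * c - lam ^ t * b t)"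
      proof
        fix t show "lam ^ t * (lam * a (Suc t)) = lam ^ t * c - lam ^ t * b t"
          using aS[of t] by (simp add: right_diff_distrib[symmetric])
      qed
      then show ?thesis by simp
    qed
    also have "(\<Sum>t. lam ^ t * c - lam ^ t * b t) = (\<Sum>t. lam ^ t * c) - (\<Sum>t. lam ^ t * b t)"
      using lam by (intro suminf_diff[symmetric] sb summable_mult2 summable_geometric) auto
    finally have "(\<Sum>t. lam ^ t * (a t + b t)) = P + c / (1 - lam)"
      using geo_sum[OF lam] by simp
    also have "\<dots> = 0"
    proof -
      have "1 - lam \<noteq> 0" using lam by simp
      then have "c / (1 - lam) = - P" unfolding c_def by (simp add: field_simps)
      then show ?thesis by simp
    qed
    finally show "disc_value \<phi> lam (reactive (\<sigma>X []) \<sigma>) \<sigma>Y = 0"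
      unfolding disc_value_def R_def[symmetric] Eab by simp
  qed
  then show ?thesis by blast
qed

end
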